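(* Let $p>1$ and $h\in C[0,\infty)$ with $h(s)>0$ for $s>0$, and assume \[ \lim_{t\to\infty} t^{-(p+1)/2}\int_0^t s^{p+1}h(s)\,ds=\infty. \] For $c>0$ define \[ E(c)=\inf_{w\in H^1_0(0,c),\,w\not\equiv0}\frac{\int_0^c|w'(s)|^2ds}{\left(\int_0^c h(s)|w(s)|^{p+1}ds\right)^{2/(p+1)}}. \] Then $E(c)\to0$ as $c\to\infty$. *)

theory Defs
  imports "HOL-Analysis.Analysis"
begin

text \<open>H^1_0(0,c) in one dimension, via the absolutely continuous representative:
  w belongs to H^1_0(0,c) with weak derivative g iff g is in L^2(0,c) and
  w(x) = integral of g over [0,x] for x in [0,c], with w(c) = 0 (and w(0) = 0 automatically).\<close>
definition H10_with_deriv :: "real \<Rightarrow> (real \<Rightarrow> real) \<Rightarrow> (real \<Rightarrow> real) \<Rightarrow> bool" where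
  "H10_with_deriv c w g \<longleftrightarrow>
     set_integrable lborel {0..c} g \<and>
     set_integrable lborel {0..c} (\<lambda>s. (g s)\<^sup>2) \<and>
     (\<forall>x\<in>{0..c}. w x = (LINT s:{0..x}|lborel. g s)) \<and>
     w c = 0"

definition E_quot :: "(real \<Rightarrow> real) \<Rightarrow> real \<Rightarrow> real \<Rightarrow> real" where
  "E_quot h p c = Inf { (LINT s:{0..c}|lborel. (g s)\<^sup>2) /
        (LINT s:{0..c}|lborel. h s * \<bar>w s\<bar> powr (p + 1)) powr (2 / (p + 1))
     | w g. H10_with_deriv c w g \<and> (\<exists>x\<in>{0..c}. w x \<noteq> 0) }"

end

theory Submission
  imports Defs
begin

lemma lint_nonneg:
  fixes f :: "real \<Rightarrow> real"
  assumes "\<And>x. x \<in> A \<Longrightarrow> f x \<ge> 0"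
  shows "(LINT s:A|lborel. f s) \<ge> 0"
  unfolding set_lebesgue_integral_def
  by (rule Bochner_Integration.integral_nonneg) (auto simp: indicator_def assms)

lemma const_integrable:
  "set_integrable lborel {a..b::real} (\<lambda>_. (k::real))"
  by (rule borel_integrable_atLeastAtMost') (rule continuous_on_const)

lemma key_bound:
  fixes h :: "real \<Rightarrow> real" and p c :: real
  assumes p: "p > 1"
    and hc: "continuous_on {0..} h"
    and hpos: "\<And>s. s > 0 \<Longrightarrow> h s > 0"
    and c: "c > 0"
    and Ipos: "(LINT s:{0..c/2}|lborel. s powr (p + 1) * h s) > 0"
  shows "E_quot h p c \<le> c / (LINT s:{0..c/2}|lborel. s powr (p + 1) * h s) powr (2 / (p + 1))"
    and "E_quot h p c \<ge> 0"
proof -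
  define S where "S = { (LINT s:{0..c}|lborel. (g s)\<^sup>2) /
        (LINT s:{0..c}|lborel. h s * \<bar>w s\<bar> powr (p + 1)) powr (2 / (p + 1))
     | w g. H10_with_deriv c w g \<and> (\<exists>x\<in>{0..c}. w x \<noteq> 0) }"
  have ES: "E_quot h p c = Inf S" unfolding E_quot_def S_def by simp
  define I where "I = (LINT s:{0..c/2}|lborel. s powr (p + 1) * h s)"
  define g :: "real \<Rightarrow> real" where "g s = (if s \<le> c/2 then 1 else -1)" for s
  define w where "w x = (LINT s:{0..x}|lborel. g s)" for x
  have g2: "(g s)\<^sup>2 = 1" for s by (simp add: g_def)
  have gint: "set_integrable lborel {0..c} g"
  proof -
    have A: "set_integrable lborel {0..c/2} g"
      using const_integrable[of 0 "c/2" 1]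
      by (subst set_integrable_cong[of lborel lborel _ "{0..c/2}" _ "\<lambda>_. 1"]) (auto simp: g_def)
    have B0: "set_integrable lborel {c/2<..c} (\<lambda>_. -1::real)"
      by (rule set_integrable_subset[OF const_integrable[of "c/2" c "-1"]]) auto
    have B: "set_integrable lborel {c/2<..c} g"
      using B0
      by (subst set_integrable_cong[of lborel lborel _ "{c/2<..c}" _ "\<lambda>_. -1"]) (auto simp: g_def)
    have "{0..c} = {0..c/2} \<union> {c/2<..c}" using c by auto
    then show ?thesis using set_integrable_Un[OF A B] by simp
  qed
  have g2int: "set_integrable lborel {0..c} (\<lambda>s. (g s)\<^sup>2)"
    using const_integrable[of 0 c 1] by (simp add: g2)
  have wval: "w x = min x (c - x)" if x: "x \<in> {0..c}" for x
  proof (cases "x \<le> c/2")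
    case True
    have "w x = (LINT s:{0..x}|lborel. (1::real))"
      unfolding w_def by (rule set_lebesgue_integral_cong) (use True in \<open>auto simp: g_def\<close>)
    also have "\<dots> = x" using x by (simp add: set_integral_const)
    finally show ?thesis using True by simp
  next
    case False
    have A: "set_integrable lborel {0..c/2} g"
      by (rule set_integrable_subset[OF gint]) (use c in auto)
    have B: "set_integrable lborel {c/2<..x} g"
      by (rule set_integrable_subset[OF gint]) (use x in auto)
    have "{0..x} = {0..c/2} \<union> {c/2<..x}" using c False x by auto
    moreover have "{0..c/2} \<inter> {c/2<..x} = {}" by auto
    ultimately have "w x = (LINT s:{0..c/2}|lborel. g s) + (LINT s:{c/2<..x}|lborel. g s)"
      unfolding w_def using set_integral_Un[OF _ A B] by metis
    also have "(LINT s:{0..c/2}|lborel. g s) = (LINT s:{0..c/2}|lborel. (1::real))"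
      by (rule set_lebesgue_integral_cong) (auto simp: g_def)
    also have "\<dots> = c/2" using c by (simp add: set_integral_const)
    also have "(LINT s:{c/2<..x}|lborel. g s) = (LINT s:{c/2<..x}|lborel. (-1::real))"
      by (rule set_lebesgue_integral_cong) (auto simp: g_def)
    also have "\<dots> = -(x - c/2)" using False by (simp add: set_integral_const)
    finally show ?thesis using False by simp
  qed
  have H: "H10_with_deriv c w g"
    unfolding H10_with_deriv_def using gint g2int wval[of c] c
    by (auto simp: w_def)
  have nz: "\<exists>x\<in>{0..c}. w x \<noteq> 0"
    using wval[of "c/2"] c by (intro bexI[of _ "c/2"]) auto
  define f where "f s = h s * \<bar>w s\<bar> powr (p + 1)" for s
  have fcont: "continuous_on {0..c} (\<lambda>s. h s * \<bar>min s (c - s)\<bar> powr (p + 1))"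
  proof (rule continuous_on_mult)
    show "continuous_on {0..c} h" by (rule continuous_on_subset[OF hc]) auto
    show "continuous_on {0..c} (\<lambda>s. \<bar>min s (c - s)\<bar> powr (p + 1))"
      by (rule continuous_on_powr') (use p in \<open>auto intro!: continuous_intros\<close>)
  qed
  have fint: "set_integrable lborel {0..c} f"
    using borel_integrable_atLeastAtMost'[OF fcont]
    by (subst set_integrable_cong[of lborel lborel _ "{0..c}" _
          "\<lambda>s. h s * \<bar>min s (c - s)\<bar> powr (p + 1)"]) (auto simp: f_def wval)
  have fA: "set_integrable lborel {0..c/2} f"
    by (rule set_integrable_subset[OF fint]) (use c in auto)
  have fB: "set_integrable lborel {c/2<..c} f"
    by (rule set_integrable_subset[OF fint]) auto
  have "{0..c} = {0..c/2} \<union> {c/2<..c}" using c by auto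
  moreover have "{0..c/2} \<inter> {c/2<..c} = {}" by auto
  ultimately have "(LINT s:{0..c}|lborel. f s) = (LINT s:{0..c/2}|lborel. f s) + (LINT s:{c/2<..c}|lborel. f s)"
    using set_integral_Un[OF _ fA fB] by metis
  moreover have "(LINT s:{0..c/2}|lborel. f s) = I"
    unfolding I_def
    by (rule set_lebesgue_integral_cong) (use c in \<open>auto simp: f_def wval\<close>)
  moreover have "(LINT s:{c/2<..c}|lborel. f s) \<ge> 0"
    by (rule lint_nonneg) (use c hpos in \<open>auto simp: f_def intro!: mult_nonneg_nonneg hpos[THEN less_imp_le]\<close>)
  ultimately have DI: "(LINT s:{0..c}|lborel. f s) \<ge> I" by simp
  have num: "(LINT s:{0..c}|lborel. (g s)\<^sup>2) = c"
    using c by (simp add: g2 set_integral_const)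
  have Ip: "I > 0" using Ipos unfolding I_def .
  have inS: "c / (LINT s:{0..c}|lborel. f s) powr (2 / (p + 1)) \<in> S"
    unfolding S_def f_def
    by (rule CollectI, intro exI[of _ w] exI[of _ g]) (simp add: num H nz)
  have Snn: "\<forall>q\<in>S. 0 \<le> q"
    unfolding S_def by (auto intro!: divide_nonneg_nonneg lint_nonneg)
  have bdd: "bdd_below S" using Snn by (auto simp: bdd_below_def)
  have "Inf S \<le> c / (LINT s:{0..c}|lborel. f s) powr (2 / (p + 1))"
    by (rule cInf_lower[OF inS bdd])
  also have "\<dots> \<le> c / I powr (2 / (p + 1))"
    using Ip DI c p by (intro divide_left_mono powr_mono2 mult_pos_pos) auto
  finally show "E_quot h p c \<le> c / (LINT s:{0..c/2}|lborel. s powr (p + 1) * h s) powr (2 / (p + 1))"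
    unfolding ES I_def .
  show "E_quot h p c \<ge> 0" unfolding ES
    using Snn inS by (intro cInf_greatest) auto
qed

theorem lemma2p3:
  fixes h :: "real \<Rightarrow> real" and p :: real
  assumes "p > 1"
    and "continuous_on {0..} h"
    and "\<And>s. s > 0 \<Longrightarrow> h s > 0"
    and "filterlim (\<lambda>t. t powr (- (p + 1) / 2) * (LINT s:{0..t}|lborel. s powr (p + 1) * h s))
           at_top at_top"
  shows "(E_quot h p \<longlongrightarrow> 0) at_top"
proof -
  define F where "F t = t powr (- (p + 1) / 2) * (LINT s:{0..t}|lborel. s powr (p + 1) * h s)" for t
  define a where "a = 2 / (p + 1)"
  have a: "a > 0" using assms(1) by (simp add: a_def)
  have half: "filterlim (\<lambda>c::real. c / 2) at_top at_top"
    unfolding filterlim_at_top eventually_at_top_linorder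
    by (metis le_divide_eq_numeral1(1) mult.commute zero_less_numeral)
  have Flim: "filterlim (\<lambda>c. F (c / 2)) at_top at_top"
    using filterlim_compose[OF assms(4) half] unfolding F_def by simp
  have G: "((\<lambda>c. 2 * F (c / 2) powr (- a)) \<longlongrightarrow> 0) at_top"
    using tendsto_mult_right_zero[OF tendsto_neg_powr[OF _ Flim], of "-a" 2] a by simp
  have ev: "eventually (\<lambda>c. 0 < F (c / 2) \<and> 0 < c) at_top"
    using eventually_conj[OF filterlim_at_top_dense[THEN iffD1, OF Flim, rule_format, of 0]
        eventually_gt_at_top[of 0]] .
  have up: "eventually (\<lambda>c. E_quot h p c \<le> 2 * F (c / 2) powr (- a)) at_top"
    using ev
  proof eventually_elim
    case (elim c)
    define t where "t = c / 2"
    define I where "I = (LINT s:{0..t}|lborel. s powr (p + 1) * h s)"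
    have t: "t > 0" using elim by (simp add: t_def)
    have FI: "F t = t powr (- (p + 1) / 2) * I" by (simp add: F_def I_def)
    have Ft: "F t > 0" using elim by (simp add: t_def)
    have IF: "I = F t * t powr ((p + 1) / 2)"
    proof -
      have "t powr ((p + 1) / 2) * t powr (- (p + 1) / 2) = 1"
        using t by (simp add: powr_add[symmetric] add_divide_distrib[symmetric])
      then show ?thesis by (simp add: FI algebra_simps)
    qed
    have Ip: "I > 0" using IF Ft t by simp
    have "E_quot h p c \<le> c / I powr a"
      using key_bound(1)[OF assms(1-3), of c] Ip elim by (simp add: I_def t_def a_def)
    also have "I powr a = F t powr a * t"
    proof -
      have e: "(p + 1) / 2 * a = 1" using assms(1) by (simp add: a_def)
      have "I powr a = F t powr a * (t powr ((p + 1) / 2)) powr a"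
        using Ft t by (simp add: IF powr_mult)
      also have "(t powr ((p + 1) / 2)) powr a = t"
        using t by (simp only: powr_powr e powr_one_gt_zero_iff)
      finally show ?thesis .
    qed
    also have "c / (F t powr a * t) = 2 * F t powr (- a)"
      using Ft t by (simp add: t_def powr_minus field_simps)
    finally show ?case by (simp add: t_def)
  qed
  have lo: "eventually (\<lambda>c. 0 \<le> E_quot h p c) at_top"
    using ev
  proof eventually_elim
    case (elim c)
    have "(LINT s:{0..c/2}|lborel. s powr (p + 1) * h s) > 0"
      using elim by (simp add: F_def zero_less_mult_iff)
    then show ?case using key_bound(2)[OF assms(1-3), of c] elim by simp
  qed
  show ?thesis
    by (rule tendsto_sandwich[OF lo up tendsto_const G])
qed

end
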